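(* Let $\Gamma=(V,E)$ be a reflexive locally finite $2$-faithful degenerate graph and let $X$ and $Y$ be $2$-atoms of $\Gamma$. Then $$|\partial(X\cap Y)|\le|\Gamma(X)\cap\Gamma(Y)|-|X\cap Y|\le\kappa_2(\Gamma),$$ and $$|\nabla(X)\setminus\nabla(Y)|\le|Y\setminus X|+\kappa_2(\Gamma)-|\partial(X\cap Y)|.$$
   Context: A graph is a pair $\Gamma=(V,E)$ with $E\subseteq V\times V$; reflexive means $(x,x)\in E$ for all $x$; $\Gamma(x)=\{y:(x,y)\in E\}$, $\Gamma(X)=\bigcup_{x\in X}\Gamma(x)$; the reverse graph is $\Gamma^-=(V,E^-)$, $E^-=\{(x,y):(y,x)\in E\}$; locally finite means $\Gamma(x)$, $\Gamma^-(x)$ finite for all $x$. $\partial(X)=\Gamma(X)\setminus X$, $\nabla(X)=V\setminus\Gamma(X)$. $\Gamma$ is $k$-separable if there is a finite $X$ with $|X|\ge k$, $|\nabla(X)|\ge k$; then $\kappa_k(\Gamma)=\min\{|\partial(X)|: X\text{ finite},|X|\ge k,|\nabla(X)|\ge k\}$. A $k$-fragment is a finite $X$ with $|X|\ge k$, $|\nabla(X)|\ge k$, $|\partial(X)|=\kappa_k(\Gamma)$; a $k$-atom is a $k$-fragment of minimum cardinality. $\Gamma$ is $k$-faithful if $|A|\le|\nabla(A)|$ for a $k$-atom $A$. $\Gamma$ is degenerate if it is $2$-separable and $\kappa_2(\Gamma)=\kappa_1(\Gamma)$. *)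

theory Defs
  imports Main
begin

definition graph :: "'a set \<Rightarrow> ('a \<times> 'a) set \<Rightarrow> bool" where
  "graph V E \<longleftrightarrow> E \<subseteq> V \<times> V"

definition reflexive_graph :: "'a set \<Rightarrow> ('a \<times> 'a) set \<Rightarrow> bool" where
  "reflexive_graph V E \<longleftrightarrow> (\<forall>x\<in>V. (x, x) \<in> E)"

definition nbr :: "('a \<times> 'a) set \<Rightarrow> 'a \<Rightarrow> 'a set" where
  "nbr E x = {y. (x, y) \<in> E}"

definition nbrs :: "('a \<times> 'a) set \<Rightarrow> 'a set \<Rightarrow> 'a set" where
  "nbrs E X = (\<Union>x\<in>X. nbr E x)"

definition rev_graph :: "('a \<times> 'a) set \<Rightarrow> ('a \<times> 'a) set" where
  "rev_graph E = {(x, y). (y, x) \<in> E}"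

definition locally_finite :: "'a set \<Rightarrow> ('a \<times> 'a) set \<Rightarrow> bool" where
  "locally_finite V E \<longleftrightarrow> (\<forall>x\<in>V. finite (nbr E x) \<and> finite (nbr (rev_graph E) x))"

definition bdry :: "('a \<times> 'a) set \<Rightarrow> 'a set \<Rightarrow> 'a set" where
  "bdry E X = nbrs E X - X"

definition nabla :: "'a set \<Rightarrow> ('a \<times> 'a) set \<Rightarrow> 'a set \<Rightarrow> 'a set" where
  "nabla V E X = V - nbrs E X"

definition card_ge :: "'a set \<Rightarrow> nat \<Rightarrow> bool" where
  "card_ge S k \<longleftrightarrow> infinite S \<or> k \<le> card S"

definition card_le :: "'a set \<Rightarrow> 'b set \<Rightarrow> bool" where
  "card_le S T \<longleftrightarrow> finite S \<and> (infinite T \<or> card S \<le> card T)"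

definition admissible :: "'a set \<Rightarrow> ('a \<times> 'a) set \<Rightarrow> nat \<Rightarrow> 'a set \<Rightarrow> bool" where
  "admissible V E k X \<longleftrightarrow> X \<subseteq> V \<and> finite X \<and> k \<le> card X \<and> card_ge (nabla V E X) k"

definition separable :: "'a set \<Rightarrow> ('a \<times> 'a) set \<Rightarrow> nat \<Rightarrow> bool" where
  "separable V E k \<longleftrightarrow> (\<exists>X. admissible V E k X)"

definition kappa :: "'a set \<Rightarrow> ('a \<times> 'a) set \<Rightarrow> nat \<Rightarrow> nat" where
  "kappa V E k = (LEAST n. \<exists>X. admissible V E k X \<and> card (bdry E X) = n)"

definition fragment :: "'a set \<Rightarrow> ('a \<times> 'a) set \<Rightarrow> nat \<Rightarrow> 'a set \<Rightarrow> bool" where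
  "fragment V E k X \<longleftrightarrow> admissible V E k X \<and> card (bdry E X) = kappa V E k"

definition atom :: "'a set \<Rightarrow> ('a \<times> 'a) set \<Rightarrow> nat \<Rightarrow> 'a set \<Rightarrow> bool" where
  "atom V E k A \<longleftrightarrow> fragment V E k A \<and> (\<forall>X. fragment V E k X \<longrightarrow> card A \<le> card X)"

definition faithful :: "'a set \<Rightarrow> ('a \<times> 'a) set \<Rightarrow> nat \<Rightarrow> bool" where
  "faithful V E k \<longleftrightarrow> (\<exists>A. atom V E k A \<and> card_le A (nabla V E A))"

definition degenerate :: "'a set \<Rightarrow> ('a \<times> 'a) set \<Rightarrow> bool" where
  "degenerate V E \<longleftrightarrow> separable V E 2 \<and> kappa V E 2 = kappa V E 1"

end

theory Submission
  imports Defs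
begin

lemma nbrs_fin: "locally_finite V E \<Longrightarrow> finite S \<Longrightarrow> S \<subseteq> V \<Longrightarrow> finite (nbrs E S)"
  unfolding locally_finite_def nbrs_def by (auto intro!: finite_UN_I)

lemma nbrs_sub: "graph V E \<Longrightarrow> nbrs E S \<subseteq> V"
  unfolding graph_def nbrs_def nbr_def by auto

lemma nbrs_refl: "reflexive_graph V E \<Longrightarrow> S \<subseteq> V \<Longrightarrow> S \<subseteq> nbrs E S"
  unfolding reflexive_graph_def nbrs_def nbr_def by auto

lemma nbrs_Un: "nbrs E (A \<union> B) = nbrs E A \<union> nbrs E B"
  unfolding nbrs_def by auto

lemma nbrs_Int: "nbrs E (A \<inter> B) \<subseteq> nbrs E A \<inter> nbrs E B"
  unfolding nbrs_def by auto

lemma card_bdry: "reflexive_graph V E \<Longrightarrow> locally_finite V E \<Longrightarrow> finite S \<Longrightarrow> S \<subseteq> V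
   \<Longrightarrow> card (nbrs E S) = card S + card (bdry E S)"
proof -
  assume a: "reflexive_graph V E" "locally_finite V E" "finite S" "S \<subseteq> V"
  have f: "finite (nbrs E S)" using nbrs_fin a by blast
  have s: "S \<subseteq> nbrs E S" using nbrs_refl a by blast
  show ?thesis unfolding bdry_def using card_Diff_subset[OF _ s] f s a(3)
    by (metis card_mono le_add_diff_inverse)
qed

theorem lemma5p2:
  fixes V :: "'a set" and E :: "('a \<times> 'a) set" and X Y :: "'a set"
  assumes "graph V E" and "reflexive_graph V E" and "locally_finite V E"
    and "faithful V E 2" and "degenerate V E"
    and "atom V E 2 X" and "atom V E 2 Y"
  shows "int (card (bdry E (X \<inter> Y)))
           \<le> int (card (nbrs E X \<inter> nbrs E Y)) - int (card (X \<inter> Y))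
       \<and> int (card (nbrs E X \<inter> nbrs E Y)) - int (card (X \<inter> Y)) \<le> int (kappa V E 2)
       \<and> int (card (nabla V E X - nabla V E Y))
           \<le> int (card (Y - X)) + int (kappa V E 2) - int (card (bdry E (X \<inter> Y)))"
proof -
  note G = assms(1) and R = assms(2) and L = assms(3)
  define k where "k = kappa V E 2"
  have fX: "finite X" "X \<subseteq> V" "2 \<le> card X" "card (bdry E X) = k"
    using assms(6) unfolding atom_def fragment_def admissible_def k_def by auto
  have fY: "finite Y" "Y \<subseteq> V" "2 \<le> card Y" "card (bdry E Y) = k"
    using assms(7) unfolding atom_def fragment_def admissible_def k_def by auto
  have cXY: "card X = card Y"
    using assms(6,7) unfolding atom_def by (simp add: le_antisym)
  have gX: "card (nbrs E X) = card X + k" using card_bdry[OF R L fX(1,2)] fX(4) by simp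
  have gY: "card (nbrs E Y) = card Y + k" using card_bdry[OF R L fY(1,2)] fY(4) by simp
  have finGX: "finite (nbrs E X)" using nbrs_fin L fX by blast
  have finGY: "finite (nbrs E Y)" using nbrs_fin L fY by blast
  have e2: "card (nbrs E X \<union> nbrs E Y) + card (nbrs E X \<inter> nbrs E Y) = card (nbrs E X) + card (nbrs E Y)"
    using card_Un_Int[OF finGX finGY] by simp
  have e3: "card (X \<union> Y) + card (X \<inter> Y) = card X + card Y"
    using card_Un_Int[OF fX(1) fY(1)] by simp
  have e4: "card (nbrs E X \<union> nbrs E Y) = card (X \<union> Y) + card (bdry E (X \<union> Y))"
    using card_bdry[OF R L, of "X \<union> Y"] fX fY by (simp add: nbrs_Un)
  have e5: "k \<le> card (bdry E (X \<union> Y))"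
  proof (cases "nabla V E (X \<union> Y) = {}")
    case False
    have adm: "admissible V E 1 (X \<union> Y)"
    proof -
      have "card X \<le> card (X \<union> Y)" using fX fY by (simp add: card_mono)
      moreover have "infinite (nabla V E (X \<union> Y)) \<or> 1 \<le> card (nabla V E (X \<union> Y))"
        using False by (metis One_nat_def Suc_leI card_gt_0_iff)
      ultimately show ?thesis unfolding admissible_def card_ge_def using fX fY by auto
    qed
    have "kappa V E 1 \<le> card (bdry E (X \<union> Y))"
      unfolding kappa_def by (rule Least_le) (use adm in blast)
    moreover have "kappa V E 1 = k" using assms(5) unfolding degenerate_def k_def by simp
    ultimately show ?thesis by simp
  next
    case True
    have V: "V = nbrs E X \<union> nbrs E Y"
      using True nbrs_sub[OF G] unfolding nabla_def by (auto simp: nbrs_Un)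
    have finV: "finite V" using V finGX finGY by simp
    obtain A where A: "atom V E 2 A" "card_le A (nabla V E A)"
      using assms(4) unfolding faithful_def by blast
    have fA: "finite A" "A \<subseteq> V" "card (bdry E A) = k"
      using A(1) unfolding atom_def fragment_def admissible_def k_def by auto
    have cA: "card A = card X"
      using A(1) assms(6) unfolding atom_def by (simp add: le_antisym)
    have nA: "card A \<le> card (nabla V E A)" using A(2) finV unfolding card_le_def nabla_def by auto
    have vA: "card V = card (nbrs E A) + card (nabla V E A)"
      unfolding nabla_def using nbrs_sub[OF G] finV
      by (metis card_Diff_subset card_mono finite_subset le_add_diff_inverse)
    have gA: "card (nbrs E A) = card A + k" using card_bdry[OF R L fA(1,2)] fA(3) by simp
    have "card (nbrs E X \<union> nbrs E Y) = card V" using V by simp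
    thus ?thesis using e4 e3 vA gA nA cA cXY by linarith
  qed
  have e6: "card (bdry E (X \<inter> Y)) + card (X \<inter> Y) \<le> card (nbrs E X \<inter> nbrs E Y)"
  proof -
    have s: "bdry E (X \<inter> Y) \<union> (X \<inter> Y) \<subseteq> nbrs E X \<inter> nbrs E Y"
      using nbrs_Int[of E X Y] nbrs_refl[OF R, of X] nbrs_refl[OF R, of Y] fX fY
      unfolding bdry_def by auto
    have "card (bdry E (X \<inter> Y) \<union> (X \<inter> Y)) = card (bdry E (X \<inter> Y)) + card (X \<inter> Y)"
      apply (rule card_Un_disjoint)
      using s finGX fX by (auto intro: finite_subset simp: bdry_def)
    thus ?thesis using card_mono[OF _ s] finGX by simp
  qed
  have e7: "nabla V E X - nabla V E Y = nbrs E Y - nbrs E X"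
    using nbrs_sub[OF G] unfolding nabla_def by auto
  have e7': "card (nbrs E Y - nbrs E X) + card (nbrs E X \<inter> nbrs E Y) = card (nbrs E Y)"
    using finGY by (metis Int_commute card_Int_Diff add.commute)
  have e8: "card (Y - X) + card (X \<inter> Y) = card Y"
    using fY(1) by (metis Int_commute card_Int_Diff add.commute)
  show ?thesis unfolding k_def[symmetric] e7 using gX gY e2 e3 e4 e5 e6 e7' e8 by linarith
qed

end
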